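(* Let $n\ge 1$ and consider the discrete-time system $$x(k+1)=A_0x(k)+B_0u(k)+E_0f(k),\qquad y(k)=C_0x(k),$$ with $A_0\in\mathbb{R}^{n\times n}$, $B_0,E_0\in\mathbb{R}^{n\times1}$, $C_0\in\mathbb{R}^{1\times n}$, known scalar input $u$, unknown scalar disturbance $f$ and scalar output $y$. Let $X(k)=[x(k)^T,f(k)]^T$, $A=\begin{bmatrix}A_0&E_0\\0_{1\times n}&1\end{bmatrix}$, $B=\begin{bmatrix}B_0\\0\end{bmatrix}$, $C=[C_0,\ 0]$, and for a gain $L\in\mathbb{R}^{n+1}$ consider the observer $$\hat X(k+1)=A\hat X(k)+Bu(k)+L\big(y(k)-C\hat X(k)\big),$$ where $\hat X(k)=[\hat x(k)^T,\hat f(k)]^T$. Then the property $$\hat f(k)=f(k-n-1)\quad\text{for all }k>n+1$$ (for all input sequences $u$, disturbance sequences $f$, and initial conditions $x(0)$, $\hat X(0)$) holds if and only if (a) $(A_0,C_0)$ is observable and $(A_0,E_0,C_0)$ has no invariant zeros, i.e. $\operatorname{rank}\begin{bmatrix} A_0-zI_n & E_0\\ C_0 & 0\end{bmatrix}=n+1$ for all $z\in\mathbb{C}$, and (b) all eigenvalues of $A-LC$ are equal to $0$.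
   Context: The observer is called the general model-based extended state observer (GMB-ESO); the last component $\hat f$ of $\hat X$ is the estimate of the total disturbance $f$. The eigenvalues of $A-LC$ are called the observer eigenvalues. *)

theory Defs
  imports "Jordan_Normal_Form.DL_Rank" "Jordan_Normal_Form.Char_Poly"
begin

definition obs_mat :: "nat \<Rightarrow> real mat \<Rightarrow> real mat \<Rightarrow> real mat" where
  "obs_mat n A0 C0 = mat n n (\<lambda>(i,j). (C0 * A0 ^\<^sub>m i) $$ (0, j))"

definition observable :: "nat \<Rightarrow> real mat \<Rightarrow> real mat \<Rightarrow> bool" where
  "observable n A0 C0 \<longleftrightarrow> vec_space.rank n (obs_mat n A0 C0) = n"

definition rosenbrock :: "nat \<Rightarrow> real mat \<Rightarrow> real mat \<Rightarrow> real mat \<Rightarrow> complex \<Rightarrow> complex mat" where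
  "rosenbrock n A0 E0 C0 z =
     four_block_mat (map_mat complex_of_real A0 - z \<cdot>\<^sub>m 1\<^sub>m n) (map_mat complex_of_real E0)
                    (map_mat complex_of_real C0) (0\<^sub>m 1 1)"

definition no_invariant_zeros :: "nat \<Rightarrow> real mat \<Rightarrow> real mat \<Rightarrow> real mat \<Rightarrow> bool" where
  "no_invariant_zeros n A0 E0 C0 \<longleftrightarrow>
     (\<forall>z::complex. vec_space.rank (n+1) (rosenbrock n A0 E0 C0 z) = n + 1)"

definition ext_A :: "nat \<Rightarrow> real mat \<Rightarrow> real mat \<Rightarrow> real mat" where
  "ext_A n A0 E0 = four_block_mat A0 E0 (0\<^sub>m 1 n) (1\<^sub>m 1)"

definition ext_B :: "nat \<Rightarrow> real mat \<Rightarrow> real mat" where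
  "ext_B n B0 = mat (n+1) 1 (\<lambda>(i,j). if i < n then B0 $$ (i,j) else 0)"

definition ext_C :: "nat \<Rightarrow> real mat \<Rightarrow> real mat" where
  "ext_C n C0 = mat 1 (n+1) (\<lambda>(i,j). if j < n then C0 $$ (i,j) else 0)"

definition delayed_exact_estimation ::
  "nat \<Rightarrow> real mat \<Rightarrow> real mat \<Rightarrow> real mat \<Rightarrow> real mat \<Rightarrow> real mat \<Rightarrow> bool" where
  "delayed_exact_estimation n A0 B0 E0 C0 L \<longleftrightarrow>
     (\<forall>(u::nat \<Rightarrow> real) (f::nat \<Rightarrow> real) (x::nat \<Rightarrow> real vec) (Xh::nat \<Rightarrow> real vec).
        x 0 \<in> carrier_vec n \<longrightarrow> Xh 0 \<in> carrier_vec (n+1) \<longrightarrow>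
        (\<forall>k. x (Suc k) = A0 *\<^sub>v x k + u k \<cdot>\<^sub>v col B0 0 + f k \<cdot>\<^sub>v col E0 0) \<longrightarrow>
        (\<forall>k. Xh (Suc k) = ext_A n A0 E0 *\<^sub>v Xh k + u k \<cdot>\<^sub>v col (ext_B n B0) 0
               + ((C0 *\<^sub>v x k) $ 0 - (ext_C n C0 *\<^sub>v Xh k) $ 0) \<cdot>\<^sub>v col L 0) \<longrightarrow>
        (\<forall>k > n + 1. Xh k $ n = f (k - n - 1)))"

end

theory Submission
  imports Defs "Jordan_Normal_Form.Schur_Decomposition"
begin

lemma mult_vec_idx:
  assumes "A \<in> carrier_mat nr nc" "V \<in> carrier_vec nc" "i < nr"
  shows "(A *\<^sub>v V) $ i = (\<Sum>j = 0..<nc. A $$ (i,j) * V $ j)"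
  using assms by (auto simp: scalar_prod_def intro!: sum.cong)

lemma mult_mat_idx:
  assumes "A \<in> carrier_mat nr m" "B \<in> carrier_mat m nc" "i < nr" "j < nc"
  shows "(A * B) $$ (i,j) = (\<Sum>l = 0..<m. A $$ (i,l) * B $$ (l,j))"
  using assms by (auto simp: scalar_prod_def intro!: sum.cong)

lemma pow_mat_add:
  assumes "A \<in> carrier_mat m m"
  shows "A ^\<^sub>m (a + b) = A ^\<^sub>m a * A ^\<^sub>m b"
proof (induct b)
  case 0 then show ?case using assms by simp
next
  case (Suc b)
  have "A ^\<^sub>m (a + Suc b) = (A ^\<^sub>m a * A ^\<^sub>m b) * A" using Suc by simp
  also have "\<dots> = A ^\<^sub>m a * (A ^\<^sub>m b * A)"
    using assms by (intro assoc_mult_mat[of _ m m _ m _ m]) auto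
  finally show ?case by simp
qed

lemma pow_mat_Suc_left:
  assumes "A \<in> carrier_mat m m"
  shows "A ^\<^sub>m (Suc k) = A * A ^\<^sub>m k"
  using pow_mat_add[OF assms, of 1 k] assms by simp

lemma eig0_nil:
  fixes B :: "complex mat"
  assumes B: "B \<in> carrier_mat m m" and ev: "\<And>e. eigenvalue B e \<Longrightarrow> e = 0"
  shows "B ^\<^sub>m m = 0\<^sub>m m m"
proof -
  obtain as where cp: "char_poly B = (\<Prod>a\<leftarrow>as. [:- a, 1:])" "length as = m"
    using char_poly_factorized[OF B] by auto
  have as0: "a = 0" if a: "a \<in> set as" for a
  proof -
    have "poly (char_poly B) a = prod_list (map (\<lambda>p. poly p a) (map (\<lambda>a. [:- a, 1:]) as))"
      unfolding cp(1) poly_prod_list by simp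
    also have "\<dots> = 0" unfolding prod_list_zero_iff using a by force
    finally show ?thesis using ev eigenvalue_root_char_poly[OF B] by blast
  qed
  obtain T P Q where sd: "schur_decomposition B as = (T,P,Q)" by (cases "schur_decomposition B as") auto
  from schur_decomposition[OF B cp(1) sd]
  have sim: "similar_mat_wit B T P Q" and ut: "upper_triangular T" and dg: "diag_mat T = as" by auto
  have dB: "m = dim_row B" using B by simp
  note sw = similar_mat_witD[OF dB sim]
  have T: "T \<in> carrier_mat m m" using sw by simp
  have Tdiag: "T $$ (i,i) = 0" if "i < m" for i
  proof -
    have "T $$ (i,i) = as ! i" using that T dg[symmetric] unfolding diag_mat_def by auto
    then show ?thesis using as0 cp(2) that by simp
  qed
  have Tlow: "T $$ (l,j) = 0" if "l < m" "j < m" "j \<le> l" for l j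
  proof (cases "j = l")
    case True then show ?thesis using Tdiag that by simp
  next
    case False then show ?thesis using ut that T unfolding upper_triangular_def by auto
  qed
  have pw: "\<forall>i j. i < m \<longrightarrow> j < m \<longrightarrow> j < i + k \<longrightarrow> (T ^\<^sub>m k) $$ (i,j) = 0" for k
  proof (induct k)
    case 0 then show ?case using T by auto
  next
    case (Suc k)
    show ?case
    proof (intro allI impI)
      fix i j assume ij: "i < m" "j < m" "j < i + Suc k"
      have "(T ^\<^sub>m Suc k) $$ (i,j) = (\<Sum>l = 0..<m. (T ^\<^sub>m k) $$ (i,l) * T $$ (l,j))"
        unfolding pow_mat.simps(2) using ij T by (intro mult_mat_idx[of _ m m _ m]) auto
      also have "\<dots> = 0"
      proof (intro sum.neutral ballI)
        fix l assume "l \<in> {0..<m}"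
        then have l: "l < m" by simp
        show "(T ^\<^sub>m k) $$ (i,l) * T $$ (l,j) = 0"
        proof (cases "l < i + k")
          case True then show ?thesis using Suc ij l by simp
        next
          case False then show ?thesis using Tlow[of l j] ij l by simp
        qed
      qed
      finally show "(T ^\<^sub>m Suc k) $$ (i,j) = 0" .
    qed
  qed
  have Tm: "T ^\<^sub>m m = 0\<^sub>m m m"
    by (rule eq_matI) (use pw T in auto)
  have "B ^\<^sub>m m = P * T ^\<^sub>m m * Q" by (rule similar_mat_wit_pow_id[OF sim])
  also have "\<dots> = 0\<^sub>m m m" unfolding Tm using sw
    by (simp add: right_mult_zero_mat[of _ m m] left_mult_zero_mat[of _ m])
  finally show ?thesis .
qed

locale sys =
  fixes n :: nat and A0 E0 C0 L :: "'a::field mat"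
  assumes A0: "A0 \<in> carrier_mat n n" and E0: "E0 \<in> carrier_mat n 1"
    and C0: "C0 \<in> carrier_mat 1 n" and L: "L \<in> carrier_mat (n+1) 1"
begin

definition "A = four_block_mat A0 E0 (0\<^sub>m 1 n) (1\<^sub>m 1)"
definition "C = mat 1 (n+1) (\<lambda>(i,j). if j < n then C0 $$ (i,j) else 0)"
definition "M = A - L * C"
definition "R z = four_block_mat (A0 - z \<cdot>\<^sub>m 1\<^sub>m n) E0 C0 (0\<^sub>m 1 1)"
definition "c i = (M ^\<^sub>m i) $$ (n,n)"
definition "g i = (\<Sum>j = 0..<n+1. C $$ (0,j) * (M ^\<^sub>m i) $$ (j,n))"
definition "Cond \<longleftrightarrow> (\<forall>i. c i = (if i \<le> n then 1 else 0)) \<and>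
   (\<forall>k\<ge>n+2. \<forall>j<n+1. (M ^\<^sub>m k) $$ (n,j) = 0)"

lemma A_carr[simp]: "A \<in> carrier_mat (n+1) (n+1)"
  unfolding A_def using A0 E0 by (auto intro!: four_block_carrier_mat)
lemma C_carr[simp]: "C \<in> carrier_mat 1 (n+1)" unfolding C_def by auto
lemma LC_carr[simp]: "L * C \<in> carrier_mat (n+1) (n+1)" using L C_carr by (rule mult_carrier_mat)
lemma M_carr[simp]: "M \<in> carrier_mat (n+1) (n+1)" unfolding M_def
  using LC_carr by (rule minus_carrier_mat)
lemma M_carr'[simp]: "M \<in> carrier_mat (Suc n) (Suc n)" using M_carr by simp
lemma Mpow_carr[simp]: "M ^\<^sub>m k \<in> carrier_mat (n+1) (n+1)" by simp
lemma Mpow_carr'[simp]: "M ^\<^sub>m k \<in> carrier_mat (Suc n) (Suc n)" by simp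
lemma dimM[simp]: "dim_row M = Suc n" "dim_col M = Suc n" using M_carr unfolding carrier_mat_def by auto
lemma Mvec_carr[simp]: "X \<in> carrier_vec (Suc n) \<Longrightarrow> M *\<^sub>v X \<in> carrier_vec (Suc n)"
  using M_carr' by (rule mult_mat_vec_carrier)
lemma Mpvec_carr[simp]: "X \<in> carrier_vec (Suc n) \<Longrightarrow> M ^\<^sub>m k *\<^sub>v X \<in> carrier_vec (Suc n)"
  using Mpow_carr' by (rule mult_mat_vec_carrier)
lemma R_carr[simp]: "R z \<in> carrier_mat (n+1) (n+1)"
  unfolding R_def using A0 E0 C0 by (auto intro!: four_block_carrier_mat)

lemma A_idx: "i < n+1 \<Longrightarrow> j < n+1 \<Longrightarrow> A $$ (i,j) =
  (if i < n then (if j < n then A0 $$ (i,j) else E0 $$ (i,0)) else (if j < n then 0 else 1))"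
  unfolding A_def using A0 E0 by (auto)

lemma C_idx: "j < n+1 \<Longrightarrow> C $$ (0,j) = (if j < n then C0 $$ (0,j) else 0)"
  unfolding C_def by auto

lemma M_idx: "i < n+1 \<Longrightarrow> j < n+1 \<Longrightarrow> M $$ (i,j) = A $$ (i,j) - L $$ (i,0) * C $$ (0,j)"
proof -
  assume a: "i < n+1" "j < n+1"
  have "M $$ (i,j) = A $$ (i,j) - (L * C) $$ (i,j)" unfolding M_def
    using a LC_carr by (subst index_minus_mat) auto
  also have "(L * C) $$ (i,j) = L $$ (i,0) * C $$ (0,j)"
    using a by (subst mult_mat_idx[OF L C_carr]) auto
  finally show ?thesis .
qed

lemma R_carr'[simp]: "R z \<in> carrier_mat (Suc n) (Suc n)" using R_carr by simp
lemma dimR[simp]: "dim_row (R z) = Suc n" "dim_col (R z) = Suc n" using R_carr unfolding carrier_mat_def by auto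

lemma R_idx: "i < n+1 \<Longrightarrow> j < n+1 \<Longrightarrow> R z $$ (i,j) =
  (if i < n then (if j < n then A0 $$ (i,j) - (if i = j then z else 0) else E0 $$ (i,0))
   else (if j < n then C0 $$ (0,j) else 0))"
  unfolding R_def using A0 E0 C0 by auto

lemma A_row_n: "l < n+1 \<Longrightarrow> A $$ (n,l) = (if l = n then 1 else 0)"
  by (simp add: A_idx)

lemma Mrow:
  assumes X: "X \<in> carrier_mat (n+1) m" and k: "k < m"
  shows "(M * X) $$ (n,k) = X $$ (n,k) - L $$ (n,0) * (\<Sum>j = 0..<n+1. C $$ (0,j) * X $$ (j,k))"
proof -
  have "(M * X) $$ (n,k) = (\<Sum>l = 0..<n+1. M $$ (n,l) * X $$ (l,k))"
    using X k by (subst mult_mat_idx[OF M_carr X]) auto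
  also have "\<dots> = (\<Sum>l = 0..<n+1. (if l = n then X $$ (l,k) else 0) - L $$ (n,0) * (C $$ (0,l) * X $$ (l,k)))"
    by (intro sum.cong refl) (auto simp: M_idx A_row_n algebra_simps)
  also have "\<dots> = X $$ (n,k) - L $$ (n,0) * (\<Sum>j = 0..<n+1. C $$ (0,j) * X $$ (j,k))"
    by (simp add: sum_subtractf sum_distrib_left algebra_simps)
  finally show ?thesis .
qed

lemma c_rec: "c (Suc i) = c i - L $$ (n,0) * g i"
  unfolding c_def g_def pow_mat_Suc_left[OF M_carr]
  by (subst Mrow[of _ "n+1"]) auto

lemma c0: "c 0 = 1" unfolding c_def by simp

lemma Mpow_Suc_idx: "i < n+1 \<Longrightarrow> j < n+1 \<Longrightarrow>
   (M ^\<^sub>m (Suc k)) $$ (i,j) = (\<Sum>l = 0..<n+1. M $$ (i,l) * (M ^\<^sub>m k) $$ (l,j))"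
  unfolding pow_mat_Suc_left[OF M_carr] by (subst mult_mat_idx[OF M_carr]) auto

lemma Mpow_add_idx: "i < n+1 \<Longrightarrow> j < n+1 \<Longrightarrow>
   (M ^\<^sub>m (a + b)) $$ (i,j) = (\<Sum>l = 0..<n+1. (M ^\<^sub>m a) $$ (i,l) * (M ^\<^sub>m b) $$ (l,j))"
  unfolding pow_mat_add[OF M_carr] by (subst mult_mat_idx) auto

lemma Mpow_Suc_right_idx: "i < n+1 \<Longrightarrow> j < n+1 \<Longrightarrow>
   (M ^\<^sub>m (Suc k)) $$ (i,j) = (\<Sum>l = 0..<n+1. (M ^\<^sub>m k) $$ (i,l) * M $$ (l,j))"
  unfolding pow_mat.simps(2) by (subst mult_mat_idx) auto

definition "Rm = mat (n+1) (n+1) (\<lambda>(i,j). (M ^\<^sub>m i) $$ (n,j))"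
definition "Km = mat (n+1) (n+1) (\<lambda>(i,j). (M ^\<^sub>m (n-j)) $$ (i,n))"

lemma Rm_carr[simp]: "Rm \<in> carrier_mat (n+1) (n+1)" unfolding Rm_def by auto
lemma Km_carr[simp]: "Km \<in> carrier_mat (n+1) (n+1)" unfolding Km_def by auto
lemma Rm_carr'[simp]: "Rm \<in> carrier_mat (Suc n) (Suc n)" unfolding Rm_def by auto
lemma Km_carr'[simp]: "Km \<in> carrier_mat (Suc n) (Suc n)" unfolding Km_def by auto
lemma dimRK[simp]: "dim_row Rm = Suc n" "dim_col Rm = Suc n" "dim_row Km = Suc n" "dim_col Km = Suc n"
  unfolding Rm_def Km_def by auto

lemma cond_dets:
  assumes "Cond"
  shows "det Rm \<noteq> 0" "det Km \<noteq> 0"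
proof -
  have cc: "\<And>i. c i = (if i \<le> n then 1 else 0)" using assms unfolding Cond_def by auto
  have idx: "(Rm * Km) $$ (i,j) = (if i \<le> j then 1 else 0)" if "i < n+1" "j < n+1" for i j
  proof -
    have "(Rm * Km) $$ (i,j) = (\<Sum>l = 0..<n+1. (M ^\<^sub>m i) $$ (n,l) * (M ^\<^sub>m (n-j)) $$ (l,n))"
      using that by (subst mult_mat_idx[OF Rm_carr Km_carr]) (auto simp: Rm_def Km_def intro!: sum.cong)
    also have "\<dots> = c (i + (n-j))" unfolding c_def by (subst Mpow_add_idx) auto
    also have "\<dots> = (if i \<le> j then 1 else 0)" using cc that by auto
    finally show ?thesis .
  qed
  have car: "Rm * Km \<in> carrier_mat (n+1) (n+1)" by auto
  have ut: "upper_triangular (Rm * Km)" unfolding upper_triangular_def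
    using idx by auto
  have "det (Rm * Km) = prod_list (diag_mat (Rm * Km))" by (rule det_upper_triangular[OF ut car])
  also have "\<dots> = (\<Prod>i = 0..<n+1. (Rm * Km) $$ (i,i))" unfolding prod_list_diag_prod by simp
  also have "\<dots> = 1" using idx by (intro prod.neutral) auto
  finally have "det Rm * det Km = 1" using det_mult[OF Rm_carr Km_carr] by simp
  then show "det Rm \<noteq> 0" "det Km \<noteq> 0" by auto
qed

lemma cond_inj:
  assumes "Cond" and V: "V \<in> carrier_vec (n+1)" and h: "\<And>i. i \<le> n \<Longrightarrow> (M ^\<^sub>m i *\<^sub>v V) $ n = 0"
  shows "V = 0\<^sub>v (n+1)"
proof (rule ccontr)
  assume ne: "V \<noteq> 0\<^sub>v (n+1)"
  have "Rm *\<^sub>v V = 0\<^sub>v (n+1)"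
  proof (rule eq_vecI)
    fix i assume i: "i < dim_vec (0\<^sub>v (n+1) :: 'a vec)"
    have "(Rm *\<^sub>v V) $ i = (\<Sum>j = 0..<n+1. (M ^\<^sub>m i) $$ (n,j) * V $ j)"
      using i V by (subst mult_vec_idx[OF Rm_carr V]) (auto simp: Rm_def intro!: sum.cong)
    also have "\<dots> = (M ^\<^sub>m i *\<^sub>v V) $ n" using V by (subst mult_vec_idx) auto
    also have "\<dots> = 0" using h i by auto
    finally show "(Rm *\<^sub>v V) $ i = 0\<^sub>v (n+1) $ i" using i by simp
  qed (auto)
  then have "det Rm = 0" using det_0_iff_vec_prod_zero_field[OF Rm_carr] V ne by blast
  then show False using cond_dets(1)[OF assms(1)] by simp
qed

lemma cond_row_n1:
  assumes "Cond" and j: "j < n+1"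
  shows "(M ^\<^sub>m (n+1)) $$ (n,j) = 0"
proof -
  have cc: "\<And>i. c i = (if i \<le> n then 1 else 0)" using assms unfolding Cond_def by auto
  define y where "y = vec (n+1) (\<lambda>l. (M ^\<^sub>m (n+1)) $$ (n,l))"
  have y: "y \<in> carrier_vec (n+1)" unfolding y_def by auto
  have KT: "transpose_mat Km \<in> carrier_mat (n+1) (n+1)" by auto
  have "transpose_mat Km *\<^sub>v y = 0\<^sub>v (n+1)"
  proof (rule eq_vecI)
    fix i assume i: "i < dim_vec (0\<^sub>v (n+1) :: 'a vec)"
    have "(transpose_mat Km *\<^sub>v y) $ i = (\<Sum>l = 0..<n+1. (M ^\<^sub>m (n+1)) $$ (n,l) * (M ^\<^sub>m (n-i)) $$ (l,n))"
      using i by (subst mult_vec_idx[OF KT y]) (auto simp: Km_def y_def intro!: sum.cong)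
    also have "\<dots> = c ((n+1) + (n-i))" unfolding c_def by (subst Mpow_add_idx) auto
    also have "\<dots> = 0" using cc by auto
    finally show "(transpose_mat Km *\<^sub>v y) $ i = 0\<^sub>v (n+1) $ i" using i by simp
  qed (auto)
  moreover have "det (transpose_mat Km) \<noteq> 0"
    using cond_dets(2)[OF assms(1)] det_transpose[OF Km_carr] by simp
  ultimately have "y = 0\<^sub>v (n+1)" using det_0_iff_vec_prod_zero_field[OF KT] y by blast
  then show ?thesis using j unfolding y_def by (metis index_vec index_zero_vec(1))
qed

lemma cond_row_n1': "Cond \<Longrightarrow> j < Suc n \<Longrightarrow> (M ^\<^sub>m (Suc n)) $$ (n,j) = 0"
  using cond_row_n1 by simp

lemma Mvec_idx:
  assumes X: "X \<in> carrier_vec (n+1)" and i: "i < n+1"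
  shows "(M *\<^sub>v X) $ i = (\<Sum>m = 0..<n+1. A $$ (i,m) * X $ m) - L $$ (i,0) * (\<Sum>m = 0..<n+1. C $$ (0,m) * X $ m)"
proof -
  have "(M *\<^sub>v X) $ i = (\<Sum>m = 0..<n+1. A $$ (i,m) * X $ m - L $$ (i,0) * (C $$ (0,m) * X $ m))"
    using X i by (subst mult_vec_idx[OF M_carr X i]) (auto simp: M_idx algebra_simps intro!: sum.cong)
  then show ?thesis by (simp only: sum_subtractf sum_distrib_left)
qed

lemma Asum_lt: "i < n \<Longrightarrow> (\<Sum>m = 0..<n+1. A $$ (i,m) * X $ m) = (\<Sum>m = 0..<n. A0 $$ (i,m) * X $ m) + E0 $$ (i,0) * X $ n"
  by (simp add: A_idx)

lemma Asum_n: "(\<Sum>m = 0..<n+1. A $$ (n,m) * X $ m) = X $ n"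
  by (simp add: A_idx)

lemma Csum: "(\<Sum>m = 0..<n+1. C $$ (0,m) * X $ m) = (\<Sum>m = 0..<n. C0 $$ (0,m) * X $ m)"
  by (simp add: C_idx)

lemma Mpow_Suc_vec:
  assumes X: "X \<in> carrier_vec (n+1)" and i: "i < n+1"
  shows "(M ^\<^sub>m (Suc j) *\<^sub>v X) $ i = (\<Sum>l = 0..<n+1. (M ^\<^sub>m j) $$ (i,l) * (M *\<^sub>v X) $ l)"
proof -
  have "M ^\<^sub>m (Suc j) *\<^sub>v X = M ^\<^sub>m j *\<^sub>v (M *\<^sub>v X)" using X
    by (simp add: assoc_mult_mat_vec[of _ "n+1" "n+1" _ "n+1"])
  then show ?thesis by (simp only:) (rule mult_vec_idx, use X i in auto)
qed

lemma pow_vec_n: "X \<in> carrier_vec (n+1) \<Longrightarrow> (M ^\<^sub>m j *\<^sub>v X) $ n = (\<Sum>l = 0..<n+1. (M ^\<^sub>m j) $$ (n,l) * X $ l)"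
  by (rule mult_vec_idx) auto

lemma cond_eig:
  assumes "Cond" and ev: "eigenvalue M lam"
  shows "lam = 0"
proof (rule ccontr)
  assume nz: "lam \<noteq> 0"
  obtain V where ev: "eigenvector M V lam" using ev unfolding eigenvalue_def by auto
  then have V: "V \<in> carrier_vec (n+1)" and Vnz: "V \<noteq> 0\<^sub>v (n+1)"
    unfolding eigenvector_def by auto
  have pw: "\<And>i. M ^\<^sub>m i *\<^sub>v V = lam ^ i \<cdot>\<^sub>v V" by (rule eigenvector_pow[OF M_carr ev])
  have "(M ^\<^sub>m (n+1) *\<^sub>v V) $ n = 0" unfolding pow_vec_n[OF V]
    by (intro sum.neutral ballI) (simp add: cond_row_n1'[OF assms(1)] del: pow_mat.simps)
  moreover have "(M ^\<^sub>m (n+1) *\<^sub>v V) $ n = lam ^ (n+1) * V $ n" unfolding pw using V by simp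
  ultimately have "lam ^ (n+1) * V $ n = 0" by simp
  then have Vn: "V $ n = 0" using nz by simp
  have "V = 0\<^sub>v (n+1)"
    by (rule cond_inj[OF assms(1) V]) (use pw V Vn in simp)
  then show False using Vnz by simp
qed

lemma cond_R_inj:
  assumes "Cond" and V: "V \<in> carrier_vec (n+1)" and RV: "R z *\<^sub>v V = 0\<^sub>v (n+1)"
  shows "V = 0\<^sub>v (n+1)"
proof -
  have cc: "\<And>i. c i = (if i \<le> n then 1 else 0)" using assms unfolding Cond_def by auto
  have Ri: "(\<Sum>m = 0..<n. A0 $$ (i,m) * V $ m) + E0 $$ (i,0) * V $ n = z * V $ i" if i: "i < n" for i
  proof -
    have "0 = (R z *\<^sub>v V) $ i" using RV i by simp
    also have "\<dots> = (\<Sum>m = 0..<n+1. R z $$ (i,m) * V $ m)" using i by (intro mult_vec_idx[OF R_carr V]) auto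
    also have "\<dots> = (\<Sum>m = 0..<n. A0 $$ (i,m) * V $ m - (if m = i then z * V $ i else 0)) + E0 $$ (i,0) * V $ n"
      using i by (simp add: R_idx algebra_simps) (intro sum.cong, auto)
    also have "\<dots> = (\<Sum>m = 0..<n. A0 $$ (i,m) * V $ m) - z * V $ i + E0 $$ (i,0) * V $ n"
      using i by (simp add: sum_subtractf)
    finally show ?thesis by (simp add: algebra_simps)
  qed
  have Rn: "(\<Sum>m = 0..<n. C0 $$ (0,m) * V $ m) = 0"
  proof -
    have "0 = (R z *\<^sub>v V) $ n" using RV by simp
    also have "\<dots> = (\<Sum>m = 0..<n+1. R z $$ (n,m) * V $ m)" by (intro mult_vec_idx[OF R_carr V]) auto
    also have "\<dots> = (\<Sum>m = 0..<n. C0 $$ (0,m) * V $ m)" by (simp add: R_idx)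
    finally show ?thesis by simp
  qed
  have MV: "(M *\<^sub>v V) $ l = z * V $ l + (if l = n then (1 - z) * V $ n else 0)" if l: "l < n+1" for l
  proof -
    have "(M *\<^sub>v V) $ l = (\<Sum>m = 0..<n+1. A $$ (l,m) * V $ m)"
      using Mvec_idx[OF V l] Csum Rn by simp
    also have "\<dots> = z * V $ l + (if l = n then (1 - z) * V $ n else 0)"
    proof (cases "l < n")
      case True then show ?thesis using Asum_lt Ri by simp
    next
      case False then have "l = n" using l by simp
      then show ?thesis using Asum_n by (simp add: algebra_simps)
    qed
    finally show ?thesis .
  qed
  define t where "t j = (M ^\<^sub>m j *\<^sub>v V) $ n" for j
  have t0: "t 0 = V $ n" unfolding t_def using V by simp
  have tS: "t (Suc j) = z * t j + (1 - z) * V $ n * c j" for j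
  proof -
    have "t (Suc j) = (\<Sum>l = 0..<n+1. (M ^\<^sub>m j) $$ (n,l) * (z * V $ l + (if l = n then (1 - z) * V $ n else 0)))"
      unfolding t_def using Mpow_Suc_vec[OF V, of n j] MV by simp
    also have "\<dots> = z * (\<Sum>l = 0..<n+1. (M ^\<^sub>m j) $$ (n,l) * V $ l) + (M ^\<^sub>m j) $$ (n,n) * ((1 - z) * V $ n)"
      by (simp add: algebra_simps sum.distrib sum_distrib_left if_distrib[of "\<lambda>x. _ * x"] cong: if_cong)
    finally show ?thesis unfolding t_def c_def pow_vec_n[OF V] by (simp add: algebra_simps)
  qed
  have "t j = V $ n" if "j \<le> n+1" for j
    using that by (induct j) (auto simp: t0 tS cc algebra_simps)
  moreover have "t (n+1) = 0" unfolding t_def pow_vec_n[OF V]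
    by (intro sum.neutral ballI) (simp add: cond_row_n1'[OF assms(1)] del: pow_mat.simps)
  ultimately have Vn: "V $ n = 0" by simp
  have "t j = 0" for j by (induct j) (auto simp: t0 tS Vn)
  then show ?thesis by (intro cond_inj[OF assms(1) V]) (auto simp: t_def)
qed

lemma cond_obs_inj:
  assumes "Cond" and v: "v \<in> carrier_vec n" and h: "\<And>i. i < n \<Longrightarrow> (C0 * A0 ^\<^sub>m i *\<^sub>v v) $ 0 = 0"
  shows "v = 0\<^sub>v n"
proof -
  define V where "V = vec (n+1) (\<lambda>l. if l < n then v $ l else 0)"
  have V: "V \<in> carrier_vec (n+1)" unfolding V_def by simp
  have claim: "i \<le> n \<Longrightarrow> \<forall>l<n+1. (M ^\<^sub>m i *\<^sub>v V) $ l = (if l < n then (A0 ^\<^sub>m i *\<^sub>v v) $ l else 0)" for i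
  proof (induct i)
    case 0 then show ?case using v V carrier_matD[OF A0] by (auto simp: V_def)
  next
    case (Suc i)
    define W where "W = M ^\<^sub>m i *\<^sub>v V"
    have W: "W \<in> carrier_vec (n+1)" unfolding W_def using V by simp
    have Wl: "\<And>l. l < n+1 \<Longrightarrow> W $ l = (if l < n then (A0 ^\<^sub>m i *\<^sub>v v) $ l else 0)"
      using Suc unfolding W_def by auto
    have A0i: "A0 ^\<^sub>m i \<in> carrier_mat n n" using A0 by simp
    have CW: "(\<Sum>m = 0..<n+1. C $$ (0,m) * W $ m) = 0"
    proof -
      have "(\<Sum>m = 0..<n+1. C $$ (0,m) * W $ m) = (\<Sum>m = 0..<n. C0 $$ (0,m) * (A0 ^\<^sub>m i *\<^sub>v v) $ m)"
        unfolding Csum using Wl by (intro sum.cong) auto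
      also have "\<dots> = (C0 *\<^sub>v (A0 ^\<^sub>m i *\<^sub>v v)) $ 0"
        using C0 A0i v by (subst mult_vec_idx[OF C0]) auto
      also have "\<dots> = (C0 * A0 ^\<^sub>m i *\<^sub>v v) $ 0" using C0 A0i v by simp
      also have "\<dots> = 0" using h Suc(2) by simp
      finally show ?thesis .
    qed
    have eq: "M ^\<^sub>m (Suc i) *\<^sub>v V = M *\<^sub>v W" unfolding W_def pow_mat_Suc_left[OF M_carr]
      using V by (simp add: assoc_mult_mat_vec[of _ "n+1" "n+1" _ "n+1"])
    show ?case
    proof (intro allI impI)
      fix l assume l: "l < n+1"
      have "(M ^\<^sub>m (Suc i) *\<^sub>v V) $ l = (\<Sum>m = 0..<n+1. A $$ (l,m) * W $ m)"
        unfolding eq using Mvec_idx[OF W l] CW by simp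
      also have "\<dots> = (if l < n then (A0 ^\<^sub>m (Suc i) *\<^sub>v v) $ l else 0)"
      proof (cases "l < n")
        case True
        have "(\<Sum>m = 0..<n+1. A $$ (l,m) * W $ m) = (\<Sum>m = 0..<n. A0 $$ (l,m) * (A0 ^\<^sub>m i *\<^sub>v v) $ m)"
          unfolding Asum_lt[OF True] using Wl by (auto intro!: sum.cong)
        also have "\<dots> = (A0 *\<^sub>v (A0 ^\<^sub>m i *\<^sub>v v)) $ l"
          using True A0i v by (subst mult_vec_idx[OF A0]) auto
        also have "\<dots> = (A0 ^\<^sub>m (Suc i) *\<^sub>v v) $ l"
          unfolding pow_mat_Suc_left[OF A0] using A0 A0i v by (simp add: assoc_mult_mat_vec[of _ n n _ n])
        finally show ?thesis using True by simp
      next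
        case False then have "l = n" using l by simp
        then show ?thesis using Asum_n[of W] Wl[of n] by simp
      qed
      finally show "(M ^\<^sub>m Suc i *\<^sub>v V) $ l = (if l < n then (A0 ^\<^sub>m Suc i *\<^sub>v v) $ l else 0)" .
    qed
  qed
  have "V = 0\<^sub>v (n+1)" by (rule cond_inj[OF assms(1) V]) (use claim in auto)
  then have "\<forall>i<Suc n. (if i < n then v $ i else 0) = 0" unfolding V_def by (auto simp: vec_eq_iff)
  then show ?thesis using v by (intro eq_vecI) (auto, metis less_SucI)
qed

lemma Kn_nz:
  assumes inj0: "\<And>V. V \<in> carrier_vec (n+1) \<Longrightarrow> R 0 *\<^sub>v V = 0\<^sub>v (n+1) \<Longrightarrow> V = 0\<^sub>v (n+1)"
    and nil: "M ^\<^sub>m (n+1) = 0\<^sub>m (n+1) (n+1)"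
  shows "\<exists>i<n+1. (M ^\<^sub>m n) $$ (i,n) \<noteq> 0"
proof (rule ccontr)
  assume "\<not> ?thesis"
  then have z: "\<And>i. i < n+1 \<Longrightarrow> (M ^\<^sub>m n) $$ (i,n) = 0" by auto
  define Q where "Q = mat (n+1) (n+1) (\<lambda>(i,j). (M ^\<^sub>m j) $$ (i,n))"
  have Q: "Q \<in> carrier_mat (n+1) (n+1)" unfolding Q_def by auto
  have "Q *\<^sub>v unit_vec (n+1) n = 0\<^sub>v (n+1)"
  proof (rule eq_vecI)
    fix i assume i: "i < dim_vec (0\<^sub>v (n+1) :: 'a vec)"
    have "(Q *\<^sub>v unit_vec (n+1) n) $ i = (\<Sum>j = 0..<n+1. Q $$ (i,j) * unit_vec (n+1) n $ j)"
      using i by (intro mult_vec_idx[OF Q]) auto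
    also have "\<dots> = Q $$ (i,n)" by (simp add: unit_vec_def)
    also have "\<dots> = 0" using z i unfolding Q_def by simp
    finally show "(Q *\<^sub>v unit_vec (n+1) n) $ i = 0\<^sub>v (n+1) $ i" using i by simp
  qed (auto simp: Q_def)
  then have "det Q = 0" using det_0_iff_vec_prod_zero_field[OF Q]
    by (metis index_unit_vec(1) index_zero_vec(1) less_add_one one_neq_zero unit_vec_carrier)
  then have "det (transpose_mat Q) = 0" using det_transpose[OF Q] by simp
  then obtain y where y: "y \<in> carrier_vec (n+1)" "y \<noteq> 0\<^sub>v (n+1)" "transpose_mat Q *\<^sub>v y = 0\<^sub>v (n+1)"
    using det_0_iff_vec_prod_zero_field[of "transpose_mat Q" "n+1"] Q by auto
  have yK: "(\<Sum>l = 0..<n+1. y $ l * (M ^\<^sub>m j) $$ (l,n)) = 0" if j: "j < n+1" for j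
  proof -
    have "0 = (transpose_mat Q *\<^sub>v y) $ j" using y j by simp
    also have "\<dots> = (\<Sum>l = 0..<n+1. transpose_mat Q $$ (j,l) * y $ l)"
      using j Q by (intro mult_vec_idx[OF _ y(1)]) auto
    also have "\<dots> = (\<Sum>l = 0..<n+1. y $ l * (M ^\<^sub>m j) $$ (l,n))"
      using j by (intro sum.cong) (auto simp: Q_def)
    finally show ?thesis by simp
  qed
  define Yk where "Yk k = vec (n+1) (\<lambda>l. \<Sum>i = 0..<n+1. y $ i * (M ^\<^sub>m k) $$ (i,l))" for k
  have Y0: "Yk 0 = y" unfolding Yk_def using y(1)
    by (intro eq_vecI) (auto simp: one_mat_def if_distrib[of "\<lambda>x. _ * x"] cong: if_cong)
  have YN: "Yk (n+1) = 0\<^sub>v (n+1)" unfolding Yk_def nil by (intro eq_vecI) auto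
  have "\<exists>k<n+1. Yk k \<noteq> 0\<^sub>v (n+1) \<and> Yk (Suc k) = 0\<^sub>v (n+1)"
  proof (rule ccontr)
    assume "\<not> ?thesis"
    then have step: "\<And>k. k < n+1 \<Longrightarrow> Yk k \<noteq> 0\<^sub>v (n+1) \<Longrightarrow> Yk (Suc k) \<noteq> 0\<^sub>v (n+1)" by auto
    have "k \<le> n+1 \<Longrightarrow> Yk k \<noteq> 0\<^sub>v (n+1)" for k
    proof (induct k)
      case 0 show ?case using Y0 y(2) by simp
    next
      case (Suc k) then show ?case using step[of k] by simp
    qed
    then show False using YN by auto
  qed
  then obtain k where k: "k < n+1" "Yk k \<noteq> 0\<^sub>v (n+1)" "Yk (Suc k) = 0\<^sub>v (n+1)" by auto
  define Y where "Y = Yk k"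
  have YS: "(\<Sum>m = 0..<n+1. Y $ m * M $$ (m,l)) = 0" if l: "l < n+1" for l
  proof -
    have "0 = Yk (Suc k) $ l" using k l by simp
    also have "\<dots> = (\<Sum>i = 0..<n+1. y $ i * (M ^\<^sub>m (Suc k)) $$ (i,l))"
      unfolding Yk_def using l by (simp del: pow_mat.simps)
    also have "\<dots> = (\<Sum>i = 0..<n+1. y $ i * (\<Sum>m = 0..<n+1. (M ^\<^sub>m k) $$ (i,m) * M $$ (m,l)))"
      using l by (intro sum.cong refl) (subst Mpow_Suc_right_idx, auto)
    also have "\<dots> = (\<Sum>i = 0..<n+1. \<Sum>m = 0..<n+1. y $ i * ((M ^\<^sub>m k) $$ (i,m) * M $$ (m,l)))"
      by (simp only: sum_distrib_left)
    also have "\<dots> = (\<Sum>m = 0..<n+1. \<Sum>i = 0..<n+1. y $ i * ((M ^\<^sub>m k) $$ (i,m) * M $$ (m,l)))"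
      by (rule sum.swap)
    also have "\<dots> = (\<Sum>m = 0..<n+1. (\<Sum>i = 0..<n+1. y $ i * (M ^\<^sub>m k) $$ (i,m)) * M $$ (m,l))"
      by (simp only: sum_distrib_right mult.assoc)
    also have "\<dots> = (\<Sum>m = 0..<n+1. Y $ m * M $$ (m,l))"
      unfolding Y_def Yk_def by (intro sum.cong) auto
    finally show ?thesis by simp
  qed
  have Yn: "Y $ n = 0" unfolding Y_def Yk_def using yK[OF k(1)] by simp
  define s where "s = (\<Sum>m = 0..<n+1. Y $ m * L $$ (m,0))"
  have YM: "(\<Sum>m = 0..<n+1. Y $ m * A $$ (m,l)) - s * C $$ (0,l) = 0" if l: "l < n+1" for l
  proof -
    have "(\<Sum>m = 0..<n+1. Y $ m * M $$ (m,l)) = (\<Sum>m = 0..<n+1. Y $ m * A $$ (m,l) - (Y $ m * L $$ (m,0)) * C $$ (0,l))"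
      using l by (intro sum.cong) (auto simp: M_idx algebra_simps)
    also have "\<dots> = (\<Sum>m = 0..<n+1. Y $ m * A $$ (m,l)) - s * C $$ (0,l)"
      unfolding s_def by (simp only: sum_subtractf sum_distrib_right)
    finally show ?thesis using YS[OF l] by simp
  qed
  define W where "W = vec (n+1) (\<lambda>i. if i < n then Y $ i else - s)"
  have W: "W \<in> carrier_vec (n+1)" unfolding W_def by simp
  have RT: "transpose_mat (R 0) \<in> carrier_mat (n+1) (n+1)" by simp
  have "transpose_mat (R 0) *\<^sub>v W = 0\<^sub>v (n+1)"
  proof (rule eq_vecI)
    fix l assume l: "l < dim_vec (0\<^sub>v (n+1) :: 'a vec)"
    then have l: "l < n+1" by simp
    have "(transpose_mat (R 0) *\<^sub>v W) $ l = (\<Sum>i = 0..<n+1. R 0 $$ (i,l) * W $ i)"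
      using l by (subst mult_vec_idx[OF RT W]) auto
    also have "\<dots> = (\<Sum>i = 0..<n. R 0 $$ (i,l) * Y $ i) - s * R 0 $$ (n,l)"
      unfolding W_def by simp
    also have "\<dots> = 0"
    proof (cases "l < n")
      case True
      have "(\<Sum>i = 0..<n. R 0 $$ (i,l) * Y $ i) = (\<Sum>m = 0..<n+1. Y $ m * A $$ (m,l))"
        using True by (simp add: R_idx A_idx Yn mult.commute)
      then show ?thesis using YM[OF l] True by (simp add: R_idx C_idx)
    next
      case False then have ln: "l = n" using l by simp
      have "(\<Sum>i = 0..<n. R 0 $$ (i,l) * Y $ i) = (\<Sum>m = 0..<n+1. Y $ m * A $$ (m,l))"
        using ln by (simp add: R_idx A_idx Yn mult.commute)
      then show ?thesis using YM[OF l] ln by (simp add: R_idx C_idx)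
    qed
    finally show "(transpose_mat (R 0) *\<^sub>v W) $ l = 0\<^sub>v (n+1) $ l" using l by simp
  qed auto
  moreover have "W \<noteq> 0\<^sub>v (n+1)"
  proof
    assume W0: "W = 0\<^sub>v (n+1)"
    have "Y = 0\<^sub>v (n+1)"
    proof (rule eq_vecI)
      fix i assume "i < dim_vec (0\<^sub>v (n+1) :: 'a vec)"
      then have i: "i < n+1" by simp
      show "Y $ i = 0\<^sub>v (n+1) $ i"
      proof (cases "i < n")
        case True then show ?thesis using arg_cong[OF W0, of "\<lambda>v. v $ i"] i unfolding W_def by simp
      next
        case False then have "i = n" using i by simp
        then show ?thesis using Yn by simp
      qed
    qed (simp add: Y_def Yk_def)
    then show False using k(2) unfolding Y_def by simp
  qed
  ultimately have "det (transpose_mat (R 0)) = 0" using det_0_iff_vec_prod_zero_field[OF RT] W by blast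
  then have "det (R 0) = 0" using det_transpose[OF R_carr] by simp
  then obtain V where "V \<in> carrier_vec (n+1)" "V \<noteq> 0\<^sub>v (n+1)" "R 0 *\<^sub>v V = 0\<^sub>v (n+1)"
    using det_0_iff_vec_prod_zero_field[OF R_carr] by blast
  then show False using inj0 by blast
qed

lemma nil_high:
  assumes nil: "M ^\<^sub>m (n+1) = 0\<^sub>m (n+1) (n+1)" and k: "k \<ge> n+1" and i: "i < n+1" and j: "j < n+1"
  shows "(M ^\<^sub>m k) $$ (i,j) = 0"
proof -
  obtain b where kb: "k = (n+1) + b" using k le_Suc_ex by blast
  have nil': "M ^\<^sub>m Suc n = 0\<^sub>m (Suc n) (Suc n)" using nil by simp
  show ?thesis unfolding kb using i j by (subst Mpow_add_idx) (auto simp: nil' simp del: pow_mat.simps)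
qed

lemma g_cond:
  assumes nil: "M ^\<^sub>m (n+1) = 0\<^sub>m (n+1) (n+1)" and g0: "\<And>k. k < n \<Longrightarrow> g k = 0"
  shows "Cond"
proof -
  have c1: "i \<le> n \<Longrightarrow> c i = 1" for i
    by (induct i) (auto simp: c0 c_rec g0)
  have "c i = (if i \<le> n then 1 else 0)" for i
    using c1[of i] nil_high[OF nil, of i n n] unfolding c_def by auto
  moreover have "\<forall>k\<ge>n+2. \<forall>j<n+1. (M ^\<^sub>m k) $$ (n,j) = 0"
    using nil_high[OF nil] by auto
  ultimately show ?thesis unfolding Cond_def by auto
qed

definition "Bx B0 = mat (n+1) 1 (\<lambda>(i,j). if i < n then B0 $$ (i,j) else (0::'a))"

definition "DEE B0 \<longleftrightarrow>
     (\<forall>(u::nat \<Rightarrow> 'a) (f::nat \<Rightarrow> 'a) (x::nat \<Rightarrow> 'a vec) (Xh::nat \<Rightarrow> 'a vec).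
        x 0 \<in> carrier_vec n \<longrightarrow> Xh 0 \<in> carrier_vec (n+1) \<longrightarrow>
        (\<forall>k. x (Suc k) = A0 *\<^sub>v x k + u k \<cdot>\<^sub>v col B0 0 + f k \<cdot>\<^sub>v col E0 0) \<longrightarrow>
        (\<forall>k. Xh (Suc k) = A *\<^sub>v Xh k + u k \<cdot>\<^sub>v col (Bx B0) 0
               + ((C0 *\<^sub>v x k) $ 0 - (C *\<^sub>v Xh k) $ 0) \<cdot>\<^sub>v col L 0) \<longrightarrow>
        (\<forall>k > n + 1. Xh k $ n = f (k - n - 1)))"

lemma err_formula:
  fixes B0 :: "'a mat" and u f :: "nat \<Rightarrow> 'a" and x Xh :: "nat \<Rightarrow> 'a vec"
  assumes B0: "B0 \<in> carrier_mat n 1"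
    and x0: "x 0 \<in> carrier_vec n" and Xh0: "Xh 0 \<in> carrier_vec (n+1)"
    and xS: "\<And>k. x (Suc k) = A0 *\<^sub>v x k + u k \<cdot>\<^sub>v col B0 0 + f k \<cdot>\<^sub>v col E0 0"
    and XS: "\<And>k. Xh (Suc k) = A *\<^sub>v Xh k + u k \<cdot>\<^sub>v col (Bx B0) 0
               + ((C0 *\<^sub>v x k) $ 0 - (C *\<^sub>v Xh k) $ 0) \<cdot>\<^sub>v col L 0"
  defines "e k i \<equiv> (if i < n then x k $ i else f k) - Xh k $ i"
  shows "i < n+1 \<Longrightarrow> e k i = (\<Sum>l = 0..<n+1. (M ^\<^sub>m k) $$ (i,l) * e 0 l)
           + (\<Sum>j<k. (f (Suc j) - f j) * (M ^\<^sub>m (k-1-j)) $$ (i,n))"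
proof -
  have cB: "col B0 0 \<in> carrier_vec n" using B0 by (intro col_carrier_vec) auto
  have cE: "col E0 0 \<in> carrier_vec n" using E0 by (intro col_carrier_vec) auto
  have cL: "col L 0 \<in> carrier_vec (n+1)" using L by (intro col_carrier_vec) auto
  have xc: "x k \<in> carrier_vec n" for k
  proof (induct k)
    case 0 show ?case by (rule x0)
  next
    case (Suc k) show ?case unfolding xS
      by (metis add_carrier_vec mult_mat_vec_carrier[OF A0 Suc] smult_carrier_vec cB cE)
  qed
  have Bxc: "Bx B0 \<in> carrier_mat (n+1) 1" unfolding Bx_def by simp
  have cBx: "col (Bx B0) 0 \<in> carrier_vec (n+1)" using Bxc by (intro col_carrier_vec) auto
  have Xc: "Xh k \<in> carrier_vec (n+1)" for k
  proof (induct k)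
    case 0 show ?case by (rule Xh0)
  next
    case (Suc k) show ?case unfolding XS
      by (metis add_carrier_vec mult_mat_vec_carrier[OF A_carr Suc] smult_carrier_vec cBx cL)
  qed
  define E where "E k = vec (n+1) (e k)" for k
  have Ec: "E k \<in> carrier_vec (n+1)" for k unfolding E_def by simp
  have CE: "(\<Sum>m = 0..<n+1. C $$ (0,m) * E k $ m) = (C0 *\<^sub>v x k) $ 0 - (C *\<^sub>v Xh k) $ 0" for k
  proof -
    have "(\<Sum>m = 0..<n+1. C $$ (0,m) * E k $ m) = (\<Sum>m = 0..<n. C0 $$ (0,m) * (x k $ m - Xh k $ m))"
      unfolding Csum E_def e_def by (intro sum.cong) auto
    also have "\<dots> = (\<Sum>m = 0..<n. C0 $$ (0,m) * x k $ m) - (\<Sum>m = 0..<n. C0 $$ (0,m) * Xh k $ m)"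
      by (simp add: algebra_simps sum_subtractf)
    also have "(\<Sum>m = 0..<n. C0 $$ (0,m) * x k $ m) = (C0 *\<^sub>v x k) $ 0"
      using C0 xc by (subst mult_vec_idx[OF C0]) auto
    also have "(\<Sum>m = 0..<n. C0 $$ (0,m) * Xh k $ m) = (C *\<^sub>v Xh k) $ 0"
      by (subst mult_vec_idx[OF C_carr Xc]) (simp, rule Csum[symmetric])
    finally show ?thesis .
  qed
  have step: "e (Suc k) i = (\<Sum>l = 0..<n+1. M $$ (i,l) * e k l) + (if i = n then f (Suc k) - f k else 0)"
    if i: "i < n+1" for i k
  proof -
    define y where "y = (C0 *\<^sub>v x k) $ 0 - (C *\<^sub>v Xh k) $ 0"
    have MS: "(\<Sum>l = 0..<n+1. M $$ (i,l) * e k l) = (\<Sum>m = 0..<n+1. A $$ (i,m) * E k $ m) - L $$ (i,0) * y"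
    proof -
      have "(\<Sum>l = 0..<n+1. M $$ (i,l) * e k l) = (M *\<^sub>v E k) $ i"
        using i by (subst mult_vec_idx[OF M_carr Ec]) (auto simp: E_def)
      then show ?thesis using Mvec_idx[OF Ec i] CE[of k] unfolding y_def by simp
    qed
    have XSi: "Xh (Suc k) $ i = (A *\<^sub>v Xh k) $ i + u k * (Bx B0) $$ (i,0) + y * L $$ (i,0)"
      unfolding XS y_def using i Xc A_carr Bxc L by simp
    have AX: "(A *\<^sub>v Xh k) $ i = (\<Sum>m = 0..<n+1. A $$ (i,m) * Xh k $ m)"
      using i by (intro mult_vec_idx[OF A_carr Xc])
    show ?thesis
    proof (cases "i < n")
      case True
      have xSi: "x (Suc k) $ i = (\<Sum>m = 0..<n. A0 $$ (i,m) * x k $ m) + u k * B0 $$ (i,0) + f k * E0 $$ (i,0)"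
      proof -
        have "x (Suc k) $ i = (A0 *\<^sub>v x k) $ i + u k * B0 $$ (i,0) + f k * E0 $$ (i,0)"
          unfolding xS using True carrier_matD[OF B0] carrier_matD[OF E0] carrier_matD[OF A0] by simp
        then show ?thesis using mult_vec_idx[OF A0 xc True] by simp
      qed
      have AE: "(\<Sum>m = 0..<n+1. A $$ (i,m) * E k $ m) = (\<Sum>m = 0..<n. A0 $$ (i,m) * x k $ m)
           - (\<Sum>m = 0..<n. A0 $$ (i,m) * Xh k $ m) + E0 $$ (i,0) * (f k - Xh k $ n)"
      proof -
        have "(\<Sum>m = 0..<n. A0 $$ (i,m) * E k $ m) = (\<Sum>m = 0..<n. A0 $$ (i,m) * x k $ m - A0 $$ (i,m) * Xh k $ m)"
          unfolding E_def e_def by (intro sum.cong refl) (auto simp: right_diff_distrib)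
        then show ?thesis unfolding Asum_lt[OF True] sum_subtractf by (simp add: E_def e_def)
      qed
      have AX': "(A *\<^sub>v Xh k) $ i = (\<Sum>m = 0..<n. A0 $$ (i,m) * Xh k $ m) + E0 $$ (i,0) * Xh k $ n"
        unfolding AX Asum_lt[OF True] ..
      have Bi: "(Bx B0) $$ (i,0) = B0 $$ (i,0)" unfolding Bx_def using True by simp
      have "e (Suc k) i = x (Suc k) $ i - Xh (Suc k) $ i" unfolding e_def using True by simp
      also have "\<dots> = (\<Sum>m = 0..<n+1. A $$ (i,m) * E k $ m) - L $$ (i,0) * y"
        unfolding AE xSi XSi AX' Bi by (simp add: algebra_simps)
      finally show ?thesis unfolding MS using True by simp
    next
      case False then have iN: "i = n" using i by simp
      have AE: "(\<Sum>m = 0..<n+1. A $$ (i,m) * E k $ m) = f k - Xh k $ n"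
        unfolding iN Asum_n E_def e_def by simp
      have AX': "(A *\<^sub>v Xh k) $ i = Xh k $ n" unfolding AX by (simp only: iN Asum_n)
      have Bi: "(Bx B0) $$ (i,0) = 0" unfolding Bx_def using iN by simp
      have "e (Suc k) i = f (Suc k) - Xh (Suc k) $ i" unfolding e_def using iN by simp
      also have "\<dots> = (\<Sum>m = 0..<n+1. A $$ (i,m) * E k $ m) - L $$ (i,0) * y + (f (Suc k) - f k)"
        unfolding AE XSi AX' Bi by (simp add: algebra_simps)
      finally show ?thesis unfolding MS using iN by simp
    qed
  qed
  show "i < n+1 \<Longrightarrow> e k i = (\<Sum>l = 0..<n+1. (M ^\<^sub>m k) $$ (i,l) * e 0 l)
           + (\<Sum>j<k. (f (Suc j) - f j) * (M ^\<^sub>m (k-1-j)) $$ (i,n))"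
  proof (induct k arbitrary: i)
    case 0 then show ?case
      by (simp add: one_mat_def if_distrib[of "\<lambda>x. x * _"] cong: if_cong)
  next
    case (Suc k)
    define D where "D j = f (Suc j) - f j" for j
    have "e (Suc k) i = (\<Sum>l = 0..<n+1. M $$ (i,l) * ((\<Sum>m = 0..<n+1. (M ^\<^sub>m k) $$ (l,m) * e 0 m)
           + (\<Sum>j<k. D j * (M ^\<^sub>m (k-1-j)) $$ (l,n)))) + (if i = n then D k else 0)"
      unfolding step[OF Suc(2)] D_def using Suc(1) by (intro arg_cong2[where f="(+)"] sum.cong refl) auto
    also have "\<dots> = (\<Sum>m = 0..<n+1. (\<Sum>l = 0..<n+1. M $$ (i,l) * (M ^\<^sub>m k) $$ (l,m)) * e 0 m)
        + (\<Sum>j<k. D j * (\<Sum>l = 0..<n+1. M $$ (i,l) * (M ^\<^sub>m (k-1-j)) $$ (l,n))) + (if i = n then D k else 0)"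
    proof -
      have s1: "(\<Sum>l = 0..<n+1. M $$ (i,l) * (\<Sum>m = 0..<n+1. (M ^\<^sub>m k) $$ (l,m) * e 0 m))
          = (\<Sum>m = 0..<n+1. (\<Sum>l = 0..<n+1. M $$ (i,l) * (M ^\<^sub>m k) $$ (l,m)) * e 0 m)"
      proof -
        have "(\<Sum>l = 0..<n+1. M $$ (i,l) * (\<Sum>m = 0..<n+1. (M ^\<^sub>m k) $$ (l,m) * e 0 m))
          = (\<Sum>l = 0..<n+1. \<Sum>m = 0..<n+1. M $$ (i,l) * (M ^\<^sub>m k) $$ (l,m) * e 0 m)"
          by (simp only: sum_distrib_left mult.assoc)
        also have "\<dots> = (\<Sum>m = 0..<n+1. \<Sum>l = 0..<n+1. M $$ (i,l) * (M ^\<^sub>m k) $$ (l,m) * e 0 m)"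
          by (rule sum.swap)
        also have "\<dots> = (\<Sum>m = 0..<n+1. (\<Sum>l = 0..<n+1. M $$ (i,l) * (M ^\<^sub>m k) $$ (l,m)) * e 0 m)"
          by (simp only: sum_distrib_right)
        finally show ?thesis .
      qed
      have s2: "(\<Sum>l = 0..<n+1. M $$ (i,l) * (\<Sum>j<k. D j * (M ^\<^sub>m (k-1-j)) $$ (l,n)))
          = (\<Sum>j<k. D j * (\<Sum>l = 0..<n+1. M $$ (i,l) * (M ^\<^sub>m (k-1-j)) $$ (l,n)))"
      proof -
        have "(\<Sum>l = 0..<n+1. M $$ (i,l) * (\<Sum>j<k. D j * (M ^\<^sub>m (k-1-j)) $$ (l,n)))
          = (\<Sum>l = 0..<n+1. \<Sum>j<k. D j * (M $$ (i,l) * (M ^\<^sub>m (k-1-j)) $$ (l,n)))"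
          by (simp only: sum_distrib_left mult.left_commute)
        also have "\<dots> = (\<Sum>j<k. \<Sum>l = 0..<n+1. D j * (M $$ (i,l) * (M ^\<^sub>m (k-1-j)) $$ (l,n)))"
          by (rule sum.swap)
        also have "\<dots> = (\<Sum>j<k. D j * (\<Sum>l = 0..<n+1. M $$ (i,l) * (M ^\<^sub>m (k-1-j)) $$ (l,n)))"
          by (simp only: sum_distrib_left)
        finally show ?thesis .
      qed
      show ?thesis by (simp only: distrib_left sum.distrib s1 s2)
    qed
    also have "\<dots> = (\<Sum>m = 0..<n+1. (M ^\<^sub>m Suc k) $$ (i,m) * e 0 m)
        + (\<Sum>j<k. D j * (M ^\<^sub>m (Suc k - 1 - j)) $$ (i,n)) + D k * (M ^\<^sub>m (Suc k - 1 - k)) $$ (i,n)"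
    proof -
      have "(\<Sum>m = 0..<n+1. (\<Sum>l = 0..<n+1. M $$ (i,l) * (M ^\<^sub>m k) $$ (l,m)) * e 0 m)
           = (\<Sum>m = 0..<n+1. (M ^\<^sub>m Suc k) $$ (i,m) * e 0 m)"
        using Suc(2) by (intro sum.cong refl) (subst Mpow_Suc_idx, auto)
      moreover have "(\<Sum>j<k. D j * (\<Sum>l = 0..<n+1. M $$ (i,l) * (M ^\<^sub>m (k-1-j)) $$ (l,n)))
           = (\<Sum>j<k. D j * (M ^\<^sub>m (Suc k - 1 - j)) $$ (i,n))"
      proof (intro sum.cong refl)
        fix j assume "j \<in> {..<k}"
        then have "Suc k - 1 - j = Suc (k-1-j)" by auto
        then show "D j * (\<Sum>l = 0..<n+1. M $$ (i,l) * (M ^\<^sub>m (k-1-j)) $$ (l,n)) = D j * (M ^\<^sub>m (Suc k - 1 - j)) $$ (i,n)"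
          using Suc(2) by (simp only:) (subst Mpow_Suc_idx, auto)
      qed
      moreover have "(if i = n then D k else 0) = D k * (M ^\<^sub>m (Suc k - 1 - k)) $$ (i,n)"
        using Suc(2) by simp
      ultimately show ?thesis by simp
    qed
    also have "\<dots> = (\<Sum>l = 0..<n+1. (M ^\<^sub>m Suc k) $$ (i,l) * e 0 l)
           + (\<Sum>j<Suc k. (f (Suc j) - f j) * (M ^\<^sub>m (Suc k-1-j)) $$ (i,n))"
      unfolding D_def by simp
    finally show ?case .
  qed
qed

lemma traj_exists:
  fixes B0 :: "'a mat"
  shows "\<exists>x Xh. x 0 = x0 \<and> Xh 0 = Xh0 \<and>
     (\<forall>k. x (Suc k) = A0 *\<^sub>v x k + u k \<cdot>\<^sub>v col B0 0 + f k \<cdot>\<^sub>v col E0 0) \<and>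
     (\<forall>k. Xh (Suc k) = A *\<^sub>v Xh k + u k \<cdot>\<^sub>v col (Bx B0) 0
               + ((C0 *\<^sub>v x k) $ 0 - (C *\<^sub>v Xh k) $ 0) \<cdot>\<^sub>v col L 0)"
proof -
  define x where "x = rec_nat x0 (\<lambda>k xk. A0 *\<^sub>v xk + u k \<cdot>\<^sub>v col B0 0 + f k \<cdot>\<^sub>v col E0 0)"
  define Xh where "Xh = rec_nat Xh0 (\<lambda>k Xk. A *\<^sub>v Xk + u k \<cdot>\<^sub>v col (Bx B0) 0
               + ((C0 *\<^sub>v x k) $ 0 - (C *\<^sub>v Xk) $ 0) \<cdot>\<^sub>v col L 0)"
  show ?thesis by (rule exI[of _ x], rule exI[of _ Xh]) (simp add: x_def Xh_def)
qed

lemma DEE_use: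
  fixes f :: "nat \<Rightarrow> 'a"
  assumes B0: "B0 \<in> carrier_mat n 1" and D: "DEE B0"
    and x0: "x0 \<in> carrier_vec n" and Xh0: "Xh0 \<in> carrier_vec (n+1)" and k: "k > n+1"
  shows "f k - (\<Sum>l = 0..<n+1. (M ^\<^sub>m k) $$ (n,l) * ((if l < n then x0 $ l else f 0) - Xh0 $ l))
           - (\<Sum>j<k. (f (Suc j) - f j) * c (k-1-j)) = f (k - n - 1)"
proof -
  obtain x Xh where tr: "x 0 = x0" "Xh 0 = Xh0"
     "\<And>k. x (Suc k) = A0 *\<^sub>v x k + (\<lambda>_. 0) k \<cdot>\<^sub>v col B0 0 + f k \<cdot>\<^sub>v col E0 0"
     "\<And>k. Xh (Suc k) = A *\<^sub>v Xh k + (\<lambda>_. 0) k \<cdot>\<^sub>v col (Bx B0) 0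
               + ((C0 *\<^sub>v x k) $ 0 - (C *\<^sub>v Xh k) $ 0) \<cdot>\<^sub>v col L 0"
    using traj_exists[of x0 Xh0 "\<lambda>_. 0" B0 f] by blast
  note H = D[unfolded DEE_def, rule_format, of x Xh "\<lambda>_. 0" f k]
  have "Xh k $ n = f (k - n - 1)"
    by (rule H) (use x0 Xh0 tr k in auto)
  moreover have "(if n < n then x k $ n else f k) - Xh k $ n = (\<Sum>l = 0..<n+1. (M ^\<^sub>m k) $$ (n,l) * ((if l < n then x 0 $ l else f 0) - Xh 0 $ l))
           + (\<Sum>j<k. (f (Suc j) - f j) * (M ^\<^sub>m (k-1-j)) $$ (n,n))"
    by (rule err_formula[where u="\<lambda>_. 0" and f=f and x=x and Xh=Xh, OF B0 _ _ tr(3) tr(4)]) (use x0 Xh0 tr in auto)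
  ultimately show ?thesis unfolding c_def tr by (simp add: algebra_simps)
qed

lemma DEE_cond:
  assumes B0: "B0 \<in> carrier_mat n 1" and D: "DEE B0"
  shows "Cond"
proof -
  have rows: "(M ^\<^sub>m k) $$ (n,j) = 0" if k: "k \<ge> n+2" and j: "j < n+1" for k j
  proof -
    define Xh0 :: "'a vec" where "Xh0 = vec (n+1) (\<lambda>l. if l = j then -1 else 0)"
    have Xh0: "Xh0 \<in> carrier_vec (n+1)" unfolding Xh0_def by simp
    define S where "S = (\<Sum>l = 0..<n+1. (M ^\<^sub>m k) $$ (n,l) * ((if l < n then 0\<^sub>v n $ l else (\<lambda>_. 0) 0) - Xh0 $ l))"
    have "(\<lambda>_. 0) k - S
           - (\<Sum>i<k. ((\<lambda>_. 0) (Suc i) - (\<lambda>_. 0) i) * c (k-1-i)) = (\<lambda>_. (0::'a)) (k - n - 1)"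
      unfolding S_def by (rule DEE_use[OF B0 D _ Xh0]) (use k in auto)
    then have S0: "S = 0" by simp
    have "S = (\<Sum>l = 0..<n+1. if l = j then (M ^\<^sub>m k) $$ (n,j) else 0)"
      unfolding S_def Xh0_def by (intro sum.cong refl) auto
    also have "\<dots> = (M ^\<^sub>m k) $$ (n,j)" using j by (subst sum.delta) auto
    finally show ?thesis using S0 by simp
  qed
  have cs: "c i = (if i \<le> n then 1 else 0)" for i
  proof -
    define f :: "nat \<Rightarrow> 'a" where "f k = (if n+2 \<le> k then 1 else 0)" for k
    define k where "k = i + n + 2"
    have "f k - (\<Sum>l = 0..<n+1. (M ^\<^sub>m k) $$ (n,l) * ((if l < n then 0\<^sub>v n $ l else f 0) - 0\<^sub>v (n+1) $ l))
           - (\<Sum>j<k. (f (Suc j) - f j) * c (k-1-j)) = f (k - n - 1)"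
      by (rule DEE_use[OF B0 D]) (auto simp: k_def)
    moreover have "(\<Sum>l = 0..<n+1. (M ^\<^sub>m k) $$ (n,l) * ((if l < n then 0\<^sub>v n $ l else f 0) - 0\<^sub>v (n+1) $ l)) = 0"
      by (intro sum.neutral) (auto simp: f_def)
    moreover have "(\<Sum>j<k. (f (Suc j) - f j) * c (k-1-j)) = (\<Sum>j<k. if j = n+1 then c (k-1-j) else 0)"
      by (intro sum.cong refl) (auto simp: f_def)
    moreover have "(\<Sum>j<k. if j = n+1 then c (k-1-j) else 0) = c i"
      by (simp add: k_def)
    moreover have "f k = 1" "f (k - n - 1) = (if n+2 \<le> i+1 then 1 else 0)" by (auto simp: f_def k_def)
    ultimately show ?thesis by auto
  qed
  show ?thesis unfolding Cond_def using cs rows by auto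
qed

lemma cond_DEE:
  assumes B0: "B0 \<in> carrier_mat n 1" and cond: "Cond"
  shows "DEE B0"
  unfolding DEE_def
proof (intro allI impI)
  fix u f :: "nat \<Rightarrow> 'a" and x Xh :: "nat \<Rightarrow> 'a vec" and k
  assume x0: "x 0 \<in> carrier_vec n" and Xh0: "Xh 0 \<in> carrier_vec (n+1)"
    and xS: "\<forall>k. x (Suc k) = A0 *\<^sub>v x k + u k \<cdot>\<^sub>v col B0 0 + f k \<cdot>\<^sub>v col E0 0"
    and XS: "\<forall>k. Xh (Suc k) = A *\<^sub>v Xh k + u k \<cdot>\<^sub>v col (Bx B0) 0
               + ((C0 *\<^sub>v x k) $ 0 - (C *\<^sub>v Xh k) $ 0) \<cdot>\<^sub>v col L 0"
    and k: "n+1 < k"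
  have cc: "\<And>i. c i = (if i \<le> n then 1 else 0)"
    and rw: "\<And>k j. k \<ge> n+2 \<Longrightarrow> j < n+1 \<Longrightarrow> (M ^\<^sub>m k) $$ (n,j) = 0"
    using cond unfolding Cond_def by auto
  define S1 where "S1 = (\<Sum>l = 0..<n+1. (M ^\<^sub>m k) $$ (n,l) * ((if l < n then x 0 $ l else f 0) - Xh 0 $ l))"
  define S2 where "S2 = (\<Sum>j<k. (f (Suc j) - f j) * (M ^\<^sub>m (k-1-j)) $$ (n,n))"
  have ef: "(if n < n then x k $ n else f k) - Xh k $ n = S1 + S2" unfolding S1_def S2_def
    by (rule err_formula[OF B0 x0 Xh0 xS[rule_format] XS[rule_format]]) simp
  have s1: "S1 = 0" unfolding S1_def
    using k rw by (intro sum.neutral) auto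
  have "S2 = (\<Sum>j<k. if k - (n+1) \<le> j then f (Suc j) - f j else 0)" unfolding S2_def
    using k by (intro sum.cong refl) (auto simp: cc[unfolded c_def])
  also have "\<dots> = (\<Sum>j\<in>{j\<in>{..<k}. k - (n+1) \<le> j}. f (Suc j) - f j)"
    by (rule sum.inter_filter[symmetric]) simp
  also have "{j\<in>{..<k}. k - (n+1) \<le> j} = {k - (n+1)..<k}" by auto
  also have "(\<Sum>j = k - (n+1)..<k. f (Suc j) - f j) = f k - f (k - (n+1))"
    by (rule sum_Suc_diff') simp
  finally have s2: "S2 = f k - f (k - (n+1))" .
  have "k - n - 1 = k - (n+1)" by simp
  then show "Xh k $ n = f (k - n - 1)" using ef s1 s2 by simp
qed

end

locale csys = sys n A0 E0 C0 L for n and A0 E0 C0 L :: "complex mat"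
begin

lemma g_zero:
  assumes inj: "\<And>z V. V \<in> carrier_vec (n+1) \<Longrightarrow> R z *\<^sub>v V = 0\<^sub>v (n+1) \<Longrightarrow> V = 0\<^sub>v (n+1)"
    and nil: "M ^\<^sub>m (n+1) = 0\<^sub>m (n+1) (n+1)"
    and k0: "k0 < n"
  shows "g k0 = 0"
proof (rule ccontr)
  assume gnz: "g k0 \<noteq> 0"
  obtain i0 where i0: "i0 < n+1" "(M ^\<^sub>m n) $$ (i0,n) \<noteq> 0" using Kn_nz[OF _ nil] inj by blast
  define p where "p = (\<Sum>k = 0..<n+1. monom (g k) (n-k))"
  have "coeff p (n-k0) = (\<Sum>k = 0..<n+1. if n - k = n - k0 then g k else 0)"
    unfolding p_def coeff_sum coeff_monom by simp
  also have "\<dots> = (\<Sum>k = 0..<n+1. if k = k0 then g k else 0)"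
    using k0 by (intro sum.cong) auto
  also have "\<dots> = g k0" using k0 by simp
  finally have "coeff p (n-k0) \<noteq> 0" using gnz by simp
  then have "n - k0 \<le> degree p" by (rule le_degree)
  then have "degree p \<noteq> 0" using k0 by simp
  then have "\<not> constant (poly p)" using constant_degree[of p] by simp
  then obtain z where pz: "poly p z = 0" using fundamental_theorem_of_algebra by blast
  have polyp: "poly p z = (\<Sum>k = 0..<n+1. g k * z ^ (n-k))"
    unfolding p_def poly_sum poly_monom by simp
  define V where "V = vec (n+1) (\<lambda>i. \<Sum>k = 0..<n+1. z ^ (n-k) * (M ^\<^sub>m k) $$ (i,n))"
  have V: "V \<in> carrier_vec (n+1)" unfolding V_def by simp
  have MV: "(M *\<^sub>v V) $ i = z * V $ i - (if i = n then z ^ (n+1) else 0)" if i: "i < n+1" for i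
  proof -
    define a where "a k = z ^ (n+1-k) * (M ^\<^sub>m k) $$ (i,n)" for k
    have "(M *\<^sub>v V) $ i = (\<Sum>l = 0..<n+1. M $$ (i,l) * V $ l)"
      using i by (intro mult_vec_idx[OF M_carr V])
    also have "\<dots> = (\<Sum>l = 0..<n+1. \<Sum>k = 0..<n+1. z ^ (n-k) * (M $$ (i,l) * (M ^\<^sub>m k) $$ (l,n)))"
      unfolding V_def by (intro sum.cong refl, subst index_vec, simp, simp only: sum_distrib_left mult.left_commute)
    also have "\<dots> = (\<Sum>k = 0..<n+1. z ^ (n-k) * (\<Sum>l = 0..<n+1. M $$ (i,l) * (M ^\<^sub>m k) $$ (l,n)))"
      by (subst sum.swap) (simp only: sum_distrib_left)
    also have "\<dots> = (\<Sum>k = 0..<n+1. a (Suc k))"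
      unfolding a_def using i by (intro sum.cong refl) (subst Mpow_Suc_idx, auto)
    finally have e1: "(M *\<^sub>v V) $ i = (\<Sum>k<n+1. a (Suc k))" by (simp add: atLeast0LessThan)
    have "z * V $ i = (\<Sum>k<n+1. z * (z ^ (n-k) * (M ^\<^sub>m k) $$ (i,n)))"
      unfolding V_def using i by (simp only: index_vec sum_distrib_left atLeast0LessThan)
    also have "\<dots> = (\<Sum>k<n+1. a k)" unfolding a_def
      by (intro sum.cong refl) (simp add: Suc_diff_le)
    finally have e2: "z * V $ i = (\<Sum>k<n+1. a k)" .
    have tel: "(\<Sum>k<n+1. a k) - (\<Sum>k<n+1. a (Suc k)) = a 0 - a (n+1)"
      unfolding sum_subtractf[symmetric] by (rule sum_lessThan_telescope')
    have an: "a (n+1) = 0" unfolding a_def using nil i by simp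
    have a0: "a 0 = (if i = n then z ^ (n+1) else 0)" unfolding a_def using i by simp
    have gen: "\<And>S1 S2 D :: complex. S1 - S2 = D \<Longrightarrow> S2 = S1 - D" by simp
    show ?thesis unfolding e1 e2 using gen[OF tel] an a0 by simp
  qed
  have CV: "(\<Sum>m = 0..<n+1. C $$ (0,m) * V $ m) = 0"
  proof -
    have "(\<Sum>m = 0..<n+1. C $$ (0,m) * V $ m) = (\<Sum>m = 0..<n+1. \<Sum>k = 0..<n+1. z ^ (n-k) * (C $$ (0,m) * (M ^\<^sub>m k) $$ (m,n)))"
      unfolding V_def by (intro sum.cong refl, subst index_vec, simp, simp only: sum_distrib_left mult.left_commute)
    also have "\<dots> = (\<Sum>k = 0..<n+1. z ^ (n-k) * g k)"
      unfolding g_def by (subst sum.swap) (simp only: sum_distrib_left)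
    also have "\<dots> = poly p z" unfolding polyp by (simp add: mult.commute)
    finally show ?thesis using pz by simp
  qed
  have "R z *\<^sub>v V = 0\<^sub>v (n+1)"
  proof (rule eq_vecI)
    fix i assume "i < dim_vec (0\<^sub>v (n+1) :: complex vec)"
    then have i: "i < n+1" by simp
    have "(R z *\<^sub>v V) $ i = (\<Sum>m = 0..<n+1. R z $$ (i,m) * V $ m)"
      using i by (intro mult_vec_idx[OF R_carr V])
    also have "\<dots> = 0"
    proof (cases "i < n")
      case True
      have "(\<Sum>m = 0..<n+1. R z $$ (i,m) * V $ m) = (\<Sum>m = 0..<n. A0 $$ (i,m) * V $ m - (if m = i then z * V $ i else 0)) + E0 $$ (i,0) * V $ n"
        using True by (simp add: R_idx algebra_simps) (intro sum.cong, auto)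
      also have "\<dots> = (\<Sum>m = 0..<n. A0 $$ (i,m) * V $ m) + E0 $$ (i,0) * V $ n - z * V $ i"
        using True by (simp add: sum_subtractf)
      also have "\<dots> = (\<Sum>m = 0..<n+1. A $$ (i,m) * V $ m) - z * V $ i"
        by (subst Asum_lt[OF True]) simp
      also have "(\<Sum>m = 0..<n+1. A $$ (i,m) * V $ m) = (M *\<^sub>v V) $ i"
        using Mvec_idx[OF V, of i] True CV by simp
      finally show ?thesis using MV[of i] True by simp
    next
      case False then have "i = n" using i by simp
      then show ?thesis using CV[unfolded Csum] by (simp add: R_idx)
    qed
    finally show "(R z *\<^sub>v V) $ i = 0\<^sub>v (n+1) $ i" using i by simp
  qed auto
  then have V0: "V = 0\<^sub>v (n+1)" using inj[OF V] by simp
  show False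
  proof (cases "z = 0")
    case True
    have "V $ i0 = (M ^\<^sub>m n) $$ (i0,n)" unfolding V_def using i0 True
      by (simp add: zero_power if_distrib[of "\<lambda>x. x * _"] cong: if_cong)
    then show False using V0 i0 by simp
  next
    case False
    have "(M *\<^sub>v V) $ n = 0" using mult_vec_idx[OF M_carr V, of n] V0 by simp
    then have "z ^ (n+1) = 0" using MV[of n] V0 by simp
    then show False using False by simp
  qed
qed

end


lemma inj_det:
  fixes R :: "'a::field mat"
  assumes R: "R \<in> carrier_mat m m"
  shows "det R \<noteq> 0 \<longleftrightarrow> (\<forall>V. V \<in> carrier_vec m \<longrightarrow> R *\<^sub>v V = 0\<^sub>v m \<longrightarrow> V = 0\<^sub>v m)"
  using det_0_iff_vec_prod_zero_field[OF R] by blast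

theorem theorem1:
  fixes n :: nat and A0 B0 E0 C0 L :: "real mat"
  assumes "n \<ge> 1"
    and "A0 \<in> carrier_mat n n" and "B0 \<in> carrier_mat n 1" and "E0 \<in> carrier_mat n 1"
    and "C0 \<in> carrier_mat 1 n" and "L \<in> carrier_mat (n+1) 1"
  shows "delayed_exact_estimation n A0 B0 E0 C0 L \<longleftrightarrow>
           ((observable n A0 C0 \<and> no_invariant_zeros n A0 E0 C0) \<and>
            (\<forall>ev::complex. eigenvalue (map_mat complex_of_real
                 (ext_A n A0 E0 - L * ext_C n C0)) ev \<longrightarrow> ev = 0))"
proof -
  note cA0 = assms(2) and cB0 = assms(3) and cE0 = assms(4) and cC0 = assms(5) and cL = assms(6)
  interpret r: sys n A0 E0 C0 L using assms by unfold_locales auto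
  define A0c where "A0c = map_mat complex_of_real A0"
  define E0c where "E0c = map_mat complex_of_real E0"
  define C0c where "C0c = map_mat complex_of_real C0"
  define Lc where "Lc = map_mat complex_of_real L"
  interpret cx: csys n A0c E0c C0c Lc
    using assms unfolding A0c_def E0c_def C0c_def Lc_def by unfold_locales auto
  have F1: "delayed_exact_estimation n A0 B0 E0 C0 L \<longleftrightarrow> r.DEE B0"
    unfolding delayed_exact_estimation_def r.DEE_def ext_A_def r.A_def ext_B_def r.Bx_def
      ext_C_def r.C_def by simp
  have F2: "ext_A n A0 E0 - L * ext_C n C0 = r.M"
    unfolding ext_A_def r.A_def ext_C_def r.C_def r.M_def ..
  have F3: "map_mat complex_of_real r.M = cx.M"
  proof (rule eq_matI)
    fix i j assume "i < dim_row cx.M" "j < dim_col cx.M"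
    then have ij: "i < n+1" "j < n+1" by auto
    show "map_mat complex_of_real r.M $$ (i,j) = cx.M $$ (i,j)"
      unfolding cx.M_idx[OF ij] cx.A_idx[OF ij] cx.C_idx[OF ij(2)]
      using ij cA0 cE0 cC0 cL
      by (simp add: r.M_idx r.A_idx r.C_idx A0c_def E0c_def C0c_def Lc_def)
  qed auto
  have F3p: "cx.M ^\<^sub>m k = map_mat complex_of_real (r.M ^\<^sub>m k)" for k
    unfolding F3[symmetric] by (rule of_real_hom.mat_hom_pow[symmetric, OF r.M_carr])
  have F3i: "(cx.M ^\<^sub>m k) $$ (i,j) = complex_of_real ((r.M ^\<^sub>m k) $$ (i,j))" if "i < n+1" "j < n+1" for k i j
    unfolding F3p using that by simp
  have F4: "cx.Cond \<longleftrightarrow> r.Cond"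
    unfolding cx.Cond_def r.Cond_def cx.c_def r.c_def using F3i by auto
  have F5: "rosenbrock n A0 E0 C0 z = cx.R z" for z
    unfolding cx.R_def unfolding rosenbrock_def A0c_def E0c_def C0c_def ..
  have F6: "map_mat complex_of_real (ext_A n A0 E0 - L * ext_C n C0) = cx.M"
    unfolding F2 F3 ..
  have obs_idx: "(obs_mat n A0 C0 *\<^sub>v v) $ i = (C0 * A0 ^\<^sub>m i *\<^sub>v v) $ 0"
    if v: "v \<in> carrier_vec n" and i: "i < n" for v i
  proof -
    have c: "C0 * A0 ^\<^sub>m i \<in> carrier_mat 1 n" using cC0 cA0 by simp
    show ?thesis unfolding obs_mat_def using v i c
      by (simp add: mult_vec_idx[OF c v] scalar_prod_def)
  qed
  have obsC: "obs_mat n A0 C0 \<in> carrier_mat n n" unfolding obs_mat_def by simp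
  show ?thesis
  proof
    assume D: "delayed_exact_estimation n A0 B0 E0 C0 L"
    have rc: "r.Cond" using r.DEE_cond[OF cB0] D F1 by simp
    have cc: "cx.Cond" using rc F4 by simp
    have "observable n A0 C0"
    proof -
      have "det (obs_mat n A0 C0) \<noteq> 0"
        unfolding inj_det[OF obsC]
      proof (intro allI impI)
        fix v :: "real vec" assume v: "v \<in> carrier_vec n" and z: "obs_mat n A0 C0 *\<^sub>v v = 0\<^sub>v n"
        show "v = 0\<^sub>v n"
        proof (rule r.cond_obs_inj[OF rc v])
          fix i assume i: "i < n"
          show "(C0 * A0 ^\<^sub>m i *\<^sub>v v) $ 0 = 0"
            using obs_idx[OF v i] z i by simp
        qed
      qed
      then show ?thesis unfolding observable_def using vec_space.det_rank_iff[OF obsC] by simp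
    qed
    moreover have "no_invariant_zeros n A0 E0 C0"
      unfolding no_invariant_zeros_def
    proof
      fix z
      have "det (cx.R z) \<noteq> 0" unfolding inj_det[OF cx.R_carr]
        using cx.cond_R_inj[OF cc] by blast
      then show "vec_space.rank (n+1) (rosenbrock n A0 E0 C0 z) = n+1"
        unfolding F5 using vec_space.det_rank_iff[OF cx.R_carr] by simp
    qed
    moreover have "\<forall>ev::complex. eigenvalue (map_mat complex_of_real
                 (ext_A n A0 E0 - L * ext_C n C0)) ev \<longrightarrow> ev = 0"
      unfolding F6 using cx.cond_eig[OF cc] by blast
    ultimately show "(observable n A0 C0 \<and> no_invariant_zeros n A0 E0 C0) \<and>
            (\<forall>ev::complex. eigenvalue (map_mat complex_of_real
                 (ext_A n A0 E0 - L * ext_C n C0)) ev \<longrightarrow> ev = 0)" by blast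
  next
    assume H: "(observable n A0 C0 \<and> no_invariant_zeros n A0 E0 C0) \<and>
            (\<forall>ev::complex. eigenvalue (map_mat complex_of_real
                 (ext_A n A0 E0 - L * ext_C n C0)) ev \<longrightarrow> ev = 0)"
    have inj: "V = 0\<^sub>v (n+1)" if "V \<in> carrier_vec (n+1)" "cx.R z *\<^sub>v V = 0\<^sub>v (n+1)" for z V
    proof -
      have "vec_space.rank (n+1) (cx.R z) = n+1" using H unfolding no_invariant_zeros_def F5 by blast
      then have "det (cx.R z) \<noteq> 0" using vec_space.det_rank_iff[OF cx.R_carr] by simp
      then show ?thesis unfolding inj_det[OF cx.R_carr] using that by blast
    qed
    have nil: "cx.M ^\<^sub>m (n+1) = 0\<^sub>m (n+1) (n+1)"
      by (rule eig0_nil[OF cx.M_carr]) (use H F6 in auto)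
    have "cx.Cond" by (rule cx.g_cond[OF nil cx.g_zero[OF inj nil]])
    then have "r.Cond" using F4 by simp
    then show "delayed_exact_estimation n A0 B0 E0 C0 L" using r.cond_DEE[OF cB0] F1 by simp
  qed
qed

end
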